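(* For every (possibly stochastic) local policy S-Local there exists a collectible reward decomposition MDP with $n$ rewards and discount factor $\gamma=1-1/\sqrt{n}$ such that $\frac{\text{S-Local}}{\text{OPT}}\le\frac{8}{\sqrt{n}}$, where S-Local denotes the expected value of the policy on that MDP.
   Context: A collectible reward decomposition MDP is an MDP with deterministic dynamics, an initial state $s_0$, discount $\gamma$, and $n$ reward states $s_1,\dots,s_n$; visiting $s_i$ for the first time yields reward $1$ and each reward can be collected only once. For each $j$ there is an option $o_j$ that follows a shortest path to $s_j$ and terminates when collecting it; its value from state $x$ is $V_j(x)=\gamma^{d(x,s_j)}$ where $d$ is shortest-path distance. A local policy is a mapping $\pi(x,h,\{V_i(x)\}_{i=1}^n)\to\Delta(\{o_i\}_{i=1}^n)$ from the current state $x$, the history $h$ of previous steps (including which rewards were collected) and the option values at $x$, to a distribution over options. The value of a policy is its expected discounted return $\mathbb{E}\sum_k\gamma^{T_k}$ ($T_k$ the time the $k$-th reward is collected), and $\text{OPT}=\max_{(i_1,\dots,i_n)}\sum_{j=0}^{n-1}\gamma^{\sum_{t=0}^{j}d_{i_t,i_{t+1}}}$ with $i_0=s_0$. *)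

theory Defs
  imports "HOL-Probability.Probability"
begin

text \<open>
  States are natural numbers; the deterministic dynamics are given by a finite
  set E of transitions (each available action moves from x to y with (x,y) in E).
  The n reward states are rs 0, ..., rs (n-1) (0-based indices), s0 is the initial
  state.
\<close>

type_synonym hist = "(nat \<times> real list \<times> nat \<times> nat set) list"
  \<comment> \<open>one entry per previously executed option: (state where the option was
      chosen, option values there, index of the chosen option, rewards newly
      collected while executing it)\<close>

type_synonym policy = "nat \<Rightarrow> hist \<Rightarrow> real list \<Rightarrow> nat pmf"
  \<comment> \<open>local policy: current state, history, option values at current state
      (V_0(x), ..., V_(n-1)(x)) \<mapsto> distribution over option indices\<close>

definition sdist :: "(nat \<times> nat) set \<Rightarrow> nat \<Rightarrow> nat \<Rightarrow> nat" where
  "sdist E x y = (LEAST k. (x, y) \<in> E ^^ k)"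

definition crd_mdp :: "nat \<Rightarrow> (nat \<times> nat) set \<Rightarrow> nat \<Rightarrow> (nat \<Rightarrow> nat) \<Rightarrow> bool" where
  "crd_mdp n E s0 rs \<longleftrightarrow>
     finite E \<and> inj_on rs {..<n} \<and> s0 \<notin> rs ` {..<n} \<and>
     (\<forall>j<n. (s0, rs j) \<in> E\<^sup>* \<and> (\<forall>i<n. (rs i, rs j) \<in> E\<^sup>*))"

text \<open>Options: nx j x is the next state when following option o_j from x;
  o_j must follow a shortest path to rs j.\<close>
definition shortest_opts ::
  "nat \<Rightarrow> (nat \<times> nat) set \<Rightarrow> (nat \<Rightarrow> nat) \<Rightarrow> (nat \<Rightarrow> nat \<Rightarrow> nat) \<Rightarrow> bool" where
  "shortest_opts n E rs nx \<longleftrightarrow>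
     (\<forall>j<n. \<forall>x. (x, rs j) \<in> E\<^sup>* \<and> x \<noteq> rs j \<longrightarrow>
        (x, nx j x) \<in> E \<and> (nx j x, rs j) \<in> E\<^sup>* \<and>
        sdist E (nx j x) (rs j) + 1 = sdist E x (rs j))"

definition optvals :: "nat \<Rightarrow> real \<Rightarrow> (nat \<times> nat) set \<Rightarrow> (nat \<Rightarrow> nat) \<Rightarrow> nat \<Rightarrow> real list" where
  "optvals n \<gamma> E rs x = map (\<lambda>i. \<gamma> ^ sdist E x (rs i)) [0..<n]"

definition newly :: "nat \<Rightarrow> (nat \<Rightarrow> nat) \<Rightarrow> (nat \<Rightarrow> nat \<Rightarrow> nat) \<Rightarrow> nat \<Rightarrow> nat \<Rightarrow> nat \<Rightarrow> nat set \<Rightarrow> nat set" where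
  "newly n rs nx j x d C = {i. i < n \<and> i \<notin> C \<and> (\<exists>m\<in>{1..d}. (nx j ^^ m) x = rs i)}"

definition first_visit :: "(nat \<Rightarrow> nat) \<Rightarrow> (nat \<Rightarrow> nat \<Rightarrow> nat) \<Rightarrow> nat \<Rightarrow> nat \<Rightarrow> nat \<Rightarrow> nat" where
  "first_visit rs nx j x i = (LEAST m. 1 \<le> m \<and> (nx j ^^ m) x = rs i)"

text \<open>Expected discounted reward collected during the next K option executions,
  starting in state x at time t with history h and collected set C.\<close>
primrec pval :: "nat \<Rightarrow> real \<Rightarrow> (nat \<times> nat) set \<Rightarrow> (nat \<Rightarrow> nat) \<Rightarrow> (nat \<Rightarrow> nat \<Rightarrow> nat)
    \<Rightarrow> policy \<Rightarrow> nat \<Rightarrow> nat \<Rightarrow> hist \<Rightarrow> nat set \<Rightarrow> nat \<Rightarrow> real" where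
  "pval n \<gamma> E rs nx \<pi> 0 x h C t = 0"
| "pval n \<gamma> E rs nx \<pi> (Suc K) x h C t =
     measure_pmf.expectation (\<pi> x h (optvals n \<gamma> E rs x))
       (\<lambda>j. let d = sdist E x (rs j); N = newly n rs nx j x d C in
            (\<Sum>i\<in>N. \<gamma> ^ (t + first_visit rs nx j x i))
            + pval n \<gamma> E rs nx \<pi> K (rs j) (h @ [(x, optvals n \<gamma> E rs x, j, N)]) (C \<union> N) (t + d))"

definition policy_value :: "nat \<Rightarrow> real \<Rightarrow> (nat \<times> nat) set \<Rightarrow> nat \<Rightarrow> (nat \<Rightarrow> nat)
    \<Rightarrow> (nat \<Rightarrow> nat \<Rightarrow> nat) \<Rightarrow> policy \<Rightarrow> real" where
  "policy_value n \<gamma> E s0 rs nx \<pi> = (SUP K. pval n \<gamma> E rs nx \<pi> K s0 [] {} 0)"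

definition tour_state :: "nat \<Rightarrow> (nat \<Rightarrow> nat) \<Rightarrow> nat list \<Rightarrow> nat \<Rightarrow> nat" where
  "tour_state s0 rs xs t = (case t of 0 \<Rightarrow> s0 | Suc k \<Rightarrow> rs (xs ! k))"

definition opt_value :: "nat \<Rightarrow> real \<Rightarrow> (nat \<times> nat) set \<Rightarrow> nat \<Rightarrow> (nat \<Rightarrow> nat) \<Rightarrow> real" where
  "opt_value n \<gamma> E s0 rs =
     Max ((\<lambda>xs. \<Sum>j<n. \<gamma> ^ (\<Sum>t\<le>j. sdist E (tour_state s0 rs xs t) (tour_state s0 rs xs (Suc t))))
          ` {xs. distinct xs \<and> set xs = {..<n}})"

end

theory Submission
  imports Defs
begin

lemma sdist_le: "(x, y) \<in> E ^^ k \<Longrightarrow> sdist E x y \<le> k"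
  unfolding sdist_def by (rule Least_le)

lemma sdist_path: "(x, y) \<in> E\<^sup>* \<Longrightarrow> (x, y) \<in> E ^^ sdist E x y"
  unfolding sdist_def using rtrancl_power by (metis LeastI_ex)

lemma sdist_refl: "sdist E x x = 0"
  using sdist_le[of x x 0 E] by simp

lemma sdist_zero: "(x, y) \<in> E\<^sup>* \<Longrightarrow> sdist E x y = 0 \<Longrightarrow> x = y"
  using sdist_path[of x y E] by simp

lemma sdist_tri: "(x, y) \<in> E\<^sup>* \<Longrightarrow> (y, z) \<in> E\<^sup>* \<Longrightarrow> sdist E x z \<le> sdist E x y + sdist E y z"
  using sdist_path[of x y E] sdist_path[of y z E] relpow_add[of "sdist E x y" "sdist E y z" E]
  by (intro sdist_le) auto

lemma opt_path:
  assumes so: "shortest_opts n E rs nx" and j: "j < n" and r: "(x, rs j) \<in> E\<^sup>*"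
  shows "m \<le> sdist E x (rs j) \<Longrightarrow> (x, (nx j ^^ m) x) \<in> E ^^ m \<and> ((nx j ^^ m) x, rs j) \<in> E\<^sup>*
          \<and> sdist E ((nx j ^^ m) x) (rs j) = sdist E x (rs j) - m"
proof (induction m)
  case 0
  then show ?case using r by simp
next
  case (Suc m)
  let ?y = "(nx j ^^ m) x"
  from Suc have IH: "(x, ?y) \<in> E ^^ m" "(?y, rs j) \<in> E\<^sup>*" "sdist E ?y (rs j) = sdist E x (rs j) - m"
    by auto
  have "?y \<noteq> rs j" using IH(3) Suc.prems sdist_refl[of E "rs j"] by auto
  then have e: "(?y, nx j ?y) \<in> E" "(nx j ?y, rs j) \<in> E\<^sup>*" "sdist E (nx j ?y) (rs j) + 1 = sdist E ?y (rs j)"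
    using so j IH(2) unfolding shortest_opts_def by blast+
  show ?case using IH e Suc.prems by auto
qed

lemma fv_ge:
  assumes so: "shortest_opts n E rs nx" and j: "j < n" and r: "(x, rs j) \<in> E\<^sup>*"
    and i: "i \<in> newly n rs nx j x (sdist E x (rs j)) C"
  shows "sdist E x (rs i) \<le> first_visit rs nx j x i"
proof -
  from i obtain m where m: "m \<in> {1..sdist E x (rs j)}" "(nx j ^^ m) x = rs i"
    unfolding newly_def by auto
  let ?m0 = "first_visit rs nx j x i"
  have m0: "1 \<le> ?m0 \<and> (nx j ^^ ?m0) x = rs i" unfolding first_visit_def
    by (rule LeastI[of _ m]) (use m in auto)
  have "?m0 \<le> m" unfolding first_visit_def by (rule Least_le) (use m in auto)
  then have "(x, (nx j ^^ ?m0) x) \<in> E ^^ ?m0"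
    using opt_path[OF so j r, of ?m0] m by auto
  then show ?thesis using m0 sdist_le by metis
qed

lemma exp_le_const:
  fixes f :: "nat \<Rightarrow> real"
  assumes "set_pmf p \<subseteq> {..<n}" "\<And>j. j < n \<Longrightarrow> f j \<le> B"
  shows "measure_pmf.expectation p f \<le> B"
proof -
  have "measure_pmf.expectation p f = (\<Sum>a\<in>{..<n}. f a * pmf p a)"
    by (rule integral_measure_pmf_real) (use assms(1) in auto)
  also have "\<dots> \<le> (\<Sum>a\<in>{..<n}. B * pmf p a)"
    by (intro sum_mono mult_right_mono) (auto intro: assms(2))
  also have "\<dots> = B" using sum_pmf_eq_1[OF _ assms(1)] by (simp add: sum_distrib_left[symmetric])
  finally show ?thesis .
qed

lemma pval_bound:
  fixes \<gamma> :: real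
  assumes g0: "0 \<le> \<gamma>" and g1: "\<gamma> \<le> 1" and so: "shortest_opts n E rs nx"
    and pol: "\<forall>x h v. set_pmf (\<pi> x h v) \<subseteq> {..<n}"
    and rr: "\<forall>i<n. \<forall>j<n. (rs i, rs j) \<in> E\<^sup>*"
  shows "(\<forall>i<n. (x, rs i) \<in> E\<^sup>*) \<Longrightarrow>
    pval n \<gamma> E rs nx \<pi> K x h C t \<le> (\<Sum>i\<in>{..<n}-C. \<gamma> ^ (t + sdist E x (rs i)))"
proof (induction K arbitrary: x h C t)
  case 0
  then show ?case using g0 by (simp add: sum_nonneg)
next
  case (Suc K)
  show ?case unfolding pval.simps
  proof (rule exp_le_const[OF pol[rule_format]])
    fix j assume j: "j < n"
    define d where "d = sdist E x (rs j)"
    define N where "N = newly n rs nx j x d C"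
    have xr: "(x, rs j) \<in> E\<^sup>*" using Suc.prems j by auto
    have NS: "N \<subseteq> {..<n} - C" unfolding N_def newly_def by auto
    have A: "(\<Sum>i\<in>N. \<gamma> ^ (t + first_visit rs nx j x i)) \<le> (\<Sum>i\<in>N. \<gamma> ^ (t + sdist E x (rs i)))"
    proof (rule sum_mono)
      fix i assume "i \<in> N"
      then have "sdist E x (rs i) \<le> first_visit rs nx j x i"
        using fv_ge[OF so j xr] unfolding N_def d_def by blast
      then show "\<gamma> ^ (t + first_visit rs nx j x i) \<le> \<gamma> ^ (t + sdist E x (rs i))"
        using g0 g1 by (intro power_decreasing) auto
    qed
    have B: "pval n \<gamma> E rs nx \<pi> K (rs j) (h @ [(x, optvals n \<gamma> E rs x, j, N)]) (C \<union> N) (t + d)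
       \<le> (\<Sum>i\<in>{..<n}-(C \<union> N). \<gamma> ^ (t + d + sdist E (rs j) (rs i)))"
      using Suc.IH rr j by blast
    have B2: "(\<Sum>i\<in>{..<n}-(C \<union> N). \<gamma> ^ (t + d + sdist E (rs j) (rs i)))
       \<le> (\<Sum>i\<in>{..<n}-(C \<union> N). \<gamma> ^ (t + sdist E x (rs i)))"
    proof (rule sum_mono)
      fix i assume "i \<in> {..<n}-(C \<union> N)"
      then have "sdist E x (rs i) \<le> d + sdist E (rs j) (rs i)"
        unfolding d_def using sdist_tri[OF xr] rr j by auto
      then show "\<gamma> ^ (t + d + sdist E (rs j) (rs i)) \<le> \<gamma> ^ (t + sdist E x (rs i))"
        using g0 g1 by (intro power_decreasing) auto
    qed
    have split: "(\<Sum>i\<in>{..<n}-C. \<gamma> ^ (t + sdist E x (rs i))) =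
        (\<Sum>i\<in>N. \<gamma> ^ (t + sdist E x (rs i))) + (\<Sum>i\<in>{..<n}-(C \<union> N). \<gamma> ^ (t + sdist E x (rs i)))"
    proof -
      have "{..<n}-C = N \<union> ({..<n}-(C \<union> N))" "N \<inter> ({..<n}-(C \<union> N)) = {}" using NS by auto
      moreover have "finite N" using NS finite_subset by blast
      ultimately show ?thesis by (simp add: sum.union_disjoint)
    qed
    show "(let d = sdist E x (rs j); N = newly n rs nx j x d C in
            (\<Sum>i\<in>N. \<gamma> ^ (t + first_visit rs nx j x i))
            + pval n \<gamma> E rs nx \<pi> K (rs j) (h @ [(x, optvals n \<gamma> E rs x, j, N)]) (C \<union> N) (t + d))
          \<le> (\<Sum>i\<in>{..<n}-C. \<gamma> ^ (t + sdist E x (rs i)))"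
      unfolding Let_def d_def[symmetric] N_def[symmetric] split using A B B2 by linarith
  qed
qed

definition gE :: "nat \<Rightarrow> nat \<Rightarrow> nat \<Rightarrow> nat \<Rightarrow> (nat \<times> nat) set" where
  "gE n M lo m = {(0, Suc i) | i. i < n} \<union> {(Suc i, Suc n) | i. i < n}
     \<union> {(n + k, Suc (n + k)) | k. 1 \<le> k \<and> k < M} \<union> {(n + M, 0)}
     \<union> {(Suc a, Suc (Suc a)) | a. lo \<le> a \<and> Suc a < lo + m}"

lemma gE_finite: "finite (gE n M lo m)"
proof -
  have "{(0, Suc i) | i. i < n} = (\<lambda>i. (0, Suc i)) ` {..<n}" by auto
  then have 1: "finite {(0, Suc i) | i. i < n}" by simp
  have "{(Suc i, Suc n) | i. i < n} = (\<lambda>i. (Suc i, Suc n)) ` {..<n}" by auto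
  then have 2: "finite {(Suc i, Suc n) | i. i < n}" by simp
  have "{(n + k, Suc (n + k)) | k. 1 \<le> k \<and> k < M} \<subseteq> (\<lambda>k. (n + k, Suc (n + k))) ` {..<M}" by auto
  then have 3: "finite {(n + k, Suc (n + k)) | k. 1 \<le> k \<and> k < M}" by (rule finite_subset) simp
  have "{(Suc a, Suc (Suc a)) | a. lo \<le> a \<and> Suc a < lo + m} \<subseteq> (\<lambda>a. (Suc a, Suc (Suc a))) ` {..<lo+m}" by auto
  then have 4: "finite {(Suc a, Suc (Suc a)) | a. lo \<le> a \<and> Suc a < lo + m}" by (rule finite_subset) simp
  show ?thesis unfolding gE_def using 1 2 3 4 by blast
qed

lemma gE_path: "1 \<le> k \<Longrightarrow> k \<le> M \<Longrightarrow> (Suc n, n + k) \<in> (gE n M lo m)\<^sup>*"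
proof (induction k)
  case 0 then show ?case by simp
next
  case (Suc k)
  show ?case
  proof (cases "k = 0")
    case True then show ?thesis by simp
  next
    case False
    then have "(Suc n, n + k) \<in> (gE n M lo m)\<^sup>*" using Suc by auto
    moreover have "(n + k, n + Suc k) \<in> gE n M lo m" using False Suc.prems unfolding gE_def by auto
    ultimately show ?thesis by (rule rtrancl_into_rtrancl)
  qed
qed

lemma gE_back: assumes "1 \<le> M" "i < n" shows "(Suc i, 0) \<in> (gE n M lo m)\<^sup>*"
proof -
  have "(Suc i, Suc n) \<in> gE n M lo m" using assms unfolding gE_def by auto
  moreover have "(Suc n, n + M) \<in> (gE n M lo m)\<^sup>*" using gE_path assms by auto
  moreover have "(n + M, 0) \<in> gE n M lo m" unfolding gE_def by auto
  ultimately show ?thesis by (meson converse_rtrancl_into_rtrancl rtrancl_into_rtrancl)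
qed

lemma gE_from0: "i < n \<Longrightarrow> (0, Suc i) \<in> gE n M lo m"
  unfolding gE_def by auto

lemma gE_crd: assumes "1 \<le> M" shows "crd_mdp n (gE n M lo m) 0 Suc"
  unfolding crd_mdp_def
proof (intro conjI allI impI)
  show "finite (gE n M lo m)" by (rule gE_finite)
  show "inj_on Suc {..<n}" by simp
  show "0 \<notin> Suc ` {..<n}" by auto
  fix j assume j: "j < n"
  show "(0, Suc j) \<in> (gE n M lo m)\<^sup>*" using gE_from0[OF j] by auto
  fix i assume i: "i < n"
  show "(Suc i, Suc j) \<in> (gE n M lo m)\<^sup>*"
    using gE_back[OF assms i] gE_from0[OF j, of M lo m] by (meson rtrancl_into_rtrancl)
qed

lemma gE_d0: assumes "i < n" shows "sdist (gE n M lo m) 0 (Suc i) = 1"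
proof -
  have "sdist (gE n M lo m) 0 (Suc i) \<le> 1" using gE_from0[OF assms] by (intro sdist_le) auto
  moreover have "sdist (gE n M lo m) 0 (Suc i) \<noteq> 0"
    using sdist_zero[of 0 "Suc i" "gE n M lo m"] gE_from0[OF assms, of M lo m] by auto
  ultimately show ?thesis by simp
qed

lemma potential:
  fixes f :: "nat \<Rightarrow> nat"
  assumes "\<And>a b. (a, b) \<in> E \<Longrightarrow> f b \<le> f a + 1"
  shows "(x, y) \<in> E ^^ k \<Longrightarrow> f y \<le> f x + k"
proof (induction k arbitrary: y)
  case 0 then show ?case by simp
next
  case (Suc k)
  then obtain z where "(x, z) \<in> E ^^ k" "(z, y) \<in> E" by auto
  then show ?case using Suc.IH assms by fastforce
qed

lemma gE_far:
  assumes "1 \<le> M" "lo + m \<le> n" "i < n" "j < n" "i \<noteq> j"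
  shows "sdist (gE n M lo m) (Suc j) (Suc i) \<ge>
     (if j \<in> {lo..<lo+m} \<and> i \<in> {lo..<lo+m} then 1 else M + 2)"
proof -
  let ?A = "{lo..<lo+m}"
  define f where "f y = (if y = Suc j then 0 else if Suc n \<le> y \<and> y \<le> n + M then y - n
      else if y = 0 then M + 1 else if j \<in> ?A \<and> 1 \<le> y \<and> y - 1 \<in> ?A then 1 else M + 2)" for y
  have fle: "f y \<le> M + 2" for y unfolding f_def by auto
  have f0: "f 0 = M + 1" unfolding f_def by simp
  have fp: "f y = y - n" if "Suc n \<le> y" "y \<le> n + M" for y
    using that assms(4) unfolding f_def by simp
  have fe: "f b \<le> f a + 1" if "(a, b) \<in> gE n M lo m" for a b
  proof -
    have "(a, b) \<in> {(0, Suc i) | i. i < n} \<or> (a, b) \<in> {(Suc i, Suc n) | i. i < n}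
     \<or> (a, b) \<in> {(n + k, Suc (n + k)) | k. 1 \<le> k \<and> k < M} \<or> (a, b) = (n + M, 0)
     \<or> (a, b) \<in> {(Suc a, Suc (Suc a)) | a. lo \<le> a \<and> Suc a < lo + m}"
      using that unfolding gE_def by blast
    then show ?thesis
    proof (elim disjE)
      assume "(a, b) \<in> {(0, Suc i) | i. i < n}"
      then have "a = 0" by auto
      then show ?thesis using fle[of b] f0 by simp
    next
      assume "(a, b) \<in> {(Suc i, Suc n) | i. i < n}"
      then have "b = Suc n" by auto
      then show ?thesis using fp[of "Suc n"] assms(1) by simp
    next
      assume "(a, b) \<in> {(n + k, Suc (n + k)) | k. 1 \<le> k \<and> k < M}"
      then obtain k where "a = n + k" "b = Suc (n + k)" "1 \<le> k" "k < M" by auto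
      then show ?thesis using fp[of a] fp[of b] by simp
    next
      assume "(a, b) = (n + M, 0)"
      then show ?thesis using fp[of "n + M"] f0 assms(1) by simp
    next
      assume "(a, b) \<in> {(Suc a, Suc (Suc a)) | a. lo \<le> a \<and> Suc a < lo + m}"
      then obtain c where c: "a = Suc c" "b = Suc (Suc c)" "lo \<le> c" "Suc c < lo + m" by auto
      have bn: "b \<le> n" "a \<le> n" using c assms(2) by auto
      show ?thesis
      proof (cases "j \<in> ?A")
        case True
        then have "f b \<le> 1" using bn c unfolding f_def by simp
        then show ?thesis by simp
      next
        case False
        then have "b \<noteq> Suc j" "a \<noteq> Suc j" using c by auto
        then have "f a = M + 2" "f b = M + 2" using bn c False unfolding f_def by simp_all
        then show ?thesis by simp
      qed
    qed
  qed
  have r: "(Suc j, Suc i) \<in> (gE n M lo m)\<^sup>*"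
    using gE_crd[OF assms(1)] assms unfolding crd_mdp_def by auto
  have "f (Suc i) \<le> f (Suc j) + sdist (gE n M lo m) (Suc j) (Suc i)"
    by (rule potential[OF fe sdist_path[OF r]])
  moreover have "f (Suc j) = 0" unfolding f_def by simp
  moreover have "f (Suc i) = (if j \<in> ?A \<and> i \<in> ?A then 1 else M + 2)"
    using assms unfolding f_def by auto
  ultimately show ?thesis by simp
qed

lemma top_F:
  fixes \<gamma> :: real
  assumes M1: "1 \<le> M" and lom: "lo + m \<le> n" and g0: "0 \<le> \<gamma>" and g1: "\<gamma> \<le> 1"
    and so: "shortest_opts n (gE n M lo m) Suc nx"
    and pol: "\<forall>x h v. set_pmf (\<pi> x h v) \<subseteq> {..<n}"
    and nM: "real n * \<gamma> ^ M \<le> 1" and a: "a < n"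
  shows "(let d = sdist (gE n M lo m) 0 (Suc a); N = newly n Suc nx a 0 d {} in
            (\<Sum>i\<in>N. \<gamma> ^ (0 + first_visit Suc nx a 0 i))
            + pval n \<gamma> (gE n M lo m) Suc nx \<pi> K (Suc a) (h @ [(0, v, a, N)]) ({} \<union> N) (0 + d))
         \<le> 2 * \<gamma> + (if a \<in> {lo..<lo+m} then real (m - 1) * \<gamma> else 0)"
proof -
  let ?E = "gE n M lo m"
  let ?A = "{lo..<lo+m}"
  have crd: "crd_mdp n ?E 0 Suc" by (rule gE_crd[OF M1])
  have d: "sdist ?E 0 (Suc a) = 1" by (rule gE_d0[OF a])
  have r0: "(0, Suc a) \<in> ?E\<^sup>*" using crd a unfolding crd_mdp_def by auto
  have p1: "((nx a ^^ 1) 0, Suc a) \<in> ?E\<^sup>* \<and> sdist ?E ((nx a ^^ 1) 0) (Suc a) = 0"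
    using opt_path[OF so a r0, of 1] d by auto
  then have nx0: "nx a 0 = Suc a" using sdist_zero by auto
  have N: "newly n Suc nx a 0 1 {} = {a}"
    unfolding newly_def using nx0 a by auto
  have fv: "first_visit Suc nx a 0 a = 1"
    unfolding first_visit_def using nx0 by (intro Least_equality) auto
  have rr: "\<forall>i<n. \<forall>j<n. (Suc i, Suc j) \<in> ?E\<^sup>*" using crd unfolding crd_mdp_def by auto
  have pb: "pval n \<gamma> ?E Suc nx \<pi> K (Suc a) (h @ [(0, v, a, {a})]) {a} 1
      \<le> (\<Sum>i\<in>{..<n}-{a}. \<gamma> ^ (1 + sdist ?E (Suc a) (Suc i)))"
    using pval_bound[OF g0 g1 so pol rr, of "Suc a" K "h @ [(0, v, a, {a})]" "{a}" 1] rr a by blast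
  have trm: "\<gamma> ^ (1 + sdist ?E (Suc a) (Suc i)) \<le> (if a \<in> ?A \<and> i \<in> ?A then \<gamma> else \<gamma> * \<gamma> ^ M)"
    if i: "i \<in> {..<n}-{a}" for i
  proof -
    have far: "sdist ?E (Suc a) (Suc i) \<ge> (if a \<in> ?A \<and> i \<in> ?A then 1 else M + 2)"
      using gE_far[OF M1 lom, of i a] i a by auto
    show ?thesis
    proof (cases "a \<in> ?A \<and> i \<in> ?A")
      case True
      then show ?thesis using g0 g1 by (simp add: power_le_one mult_left_le)
    next
      case False
      then have "M + 2 \<le> sdist ?E (Suc a) (Suc i)" using far by (simp only: if_False)
      then have "Suc M \<le> 1 + sdist ?E (Suc a) (Suc i)" by simp
      then have "\<gamma> ^ (1 + sdist ?E (Suc a) (Suc i)) \<le> \<gamma> ^ Suc M"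
        using g0 g1 by (intro power_decreasing) auto
      then show ?thesis by (subst if_not_P[OF False]) simp
    qed
  qed
  have S: "(\<Sum>i\<in>{..<n}-{a}. \<gamma> ^ (1 + sdist ?E (Suc a) (Suc i)))
     \<le> (\<Sum>i\<in>{..<n}-{a}. (if a \<in> ?A \<and> i \<in> ?A then \<gamma> else 0)) + (\<Sum>i\<in>{..<n}-{a}. \<gamma> * \<gamma> ^ M)"
  proof -
    have "(\<Sum>i\<in>{..<n}-{a}. \<gamma> ^ (1 + sdist ?E (Suc a) (Suc i)))
        \<le> (\<Sum>i\<in>{..<n}-{a}. (if a \<in> ?A \<and> i \<in> ?A then \<gamma> else 0) + \<gamma> * \<gamma> ^ M)"
    proof (rule sum_mono)
      fix i assume i: "i \<in> {..<n}-{a}"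
      have gm: "0 \<le> \<gamma> * \<gamma> ^ M" using g0 by simp
      have "\<gamma> ^ (1 + sdist ?E (Suc a) (Suc i)) \<le> (if a \<in> ?A \<and> i \<in> ?A then \<gamma> else \<gamma> * \<gamma> ^ M)"
        by (rule trm[OF i])
      also have "\<dots> \<le> (if a \<in> ?A \<and> i \<in> ?A then \<gamma> else 0) + \<gamma> * \<gamma> ^ M"
      proof -
        have "\<And>c. (if c then \<gamma> else \<gamma> * \<gamma> ^ M) \<le> (if c then \<gamma> else 0) + \<gamma> * \<gamma> ^ M"
          using gm by auto
        then show ?thesis .
      qed
      finally show "\<gamma> ^ (1 + sdist ?E (Suc a) (Suc i)) \<le> (if a \<in> ?A \<and> i \<in> ?A then \<gamma> else 0) + \<gamma> * \<gamma> ^ M" .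
    qed
    then show ?thesis by (simp add: sum.distrib)
  qed
  have S2: "(\<Sum>i\<in>{..<n}-{a}. \<gamma> * \<gamma> ^ M) \<le> \<gamma>"
  proof -
    have "(\<Sum>i\<in>{..<n}-{a}. \<gamma> * \<gamma> ^ M) \<le> (\<Sum>i\<in>{..<n}. \<gamma> * \<gamma> ^ M)"
      by (rule sum_mono2) (use g0 in auto)
    also have "\<dots> = \<gamma> * (real n * \<gamma> ^ M)" by simp
    also have "\<dots> \<le> \<gamma>" using nM g0 by (simp add: mult_left_le)
    finally show ?thesis .
  qed
  have S1: "(\<Sum>i\<in>{..<n}-{a}. (if a \<in> ?A \<and> i \<in> ?A then \<gamma> else 0))
      = (if a \<in> ?A then real (m - 1) * \<gamma> else 0)"
  proof (cases "a \<in> ?A")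
    case True
    have "(\<Sum>i\<in>{..<n}-{a}. (if a \<in> ?A \<and> i \<in> ?A then \<gamma> else 0))
        = (\<Sum>i\<in>{..<n}-{a}. (if i \<in> ?A then \<gamma> else 0))"
      using True by (intro sum.cong) auto
    also have "\<dots> = (\<Sum>i\<in>({..<n}-{a}) \<inter> ?A. \<gamma>)"
      by (rule sum.inter_restrict[symmetric]) simp
    also have "({..<n}-{a}) \<inter> ?A = ?A - {a}" using lom by auto
    finally have e1: "(\<Sum>i\<in>{..<n}-{a}. (if a \<in> ?A \<and> i \<in> ?A then \<gamma> else 0)) = (\<Sum>i\<in>?A - {a}. \<gamma>)" .
    have "card (?A - {a}) = m - 1" using True by simp
    then show ?thesis using True e1 by simp
  next
    case False
    have "(\<Sum>i\<in>{..<n}-{a}. (if a \<in> ?A \<and> i \<in> ?A then \<gamma> else 0)) = (\<Sum>i\<in>{..<n}-{a}. 0)"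
      by (rule sum.cong) (use False in auto)
    then show ?thesis by (subst if_not_P[OF False]) simp
  qed
  show ?thesis unfolding Let_def d N using fv pb S S1 S2 by simp
qed

lemma top_bound:
  fixes \<gamma> :: real
  assumes M1: "1 \<le> M" and lom: "lo + m \<le> n" and g0: "0 \<le> \<gamma>" and g1: "\<gamma> \<le> 1"
    and so: "shortest_opts n (gE n M lo m) Suc nx"
    and pol: "\<forall>x h v. set_pmf (\<pi> x h v) \<subseteq> {..<n}"
    and nM: "real n * \<gamma> ^ M \<le> 1"
    and blk: "real (m - 1) * (\<Sum>a\<in>{lo..<lo+m}. pmf (\<pi> 0 [] (optvals n \<gamma> (gE n M lo m) Suc 0)) a) \<le> 2"
  shows "pval n \<gamma> (gE n M lo m) Suc nx \<pi> K 0 [] {} 0 \<le> 4 * \<gamma>"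
proof (cases K)
  case 0
  then show ?thesis using g0 by simp
next
  case (Suc K')
  let ?E = "gE n M lo m"
  let ?A = "{lo..<lo+m}"
  let ?p = "\<pi> 0 [] (optvals n \<gamma> ?E Suc 0)"
  define F where "F j = (let d = sdist ?E 0 (Suc j); N = newly n Suc nx j 0 d {} in
            (\<Sum>i\<in>N. \<gamma> ^ (0 + first_visit Suc nx j 0 i))
            + pval n \<gamma> ?E Suc nx \<pi> K' (Suc j) ([] @ [(0, optvals n \<gamma> ?E Suc 0, j, N)]) ({} \<union> N) (0 + d))" for j
  have "pval n \<gamma> ?E Suc nx \<pi> K 0 [] {} 0 = measure_pmf.expectation ?p F"
    unfolding Suc F_def by (rule pval.simps(2))
  also have "\<dots> = (\<Sum>a\<in>{..<n}. F a * pmf ?p a)"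
    by (rule integral_measure_pmf_real) (use pol in auto)
  also have "\<dots> \<le> (\<Sum>a\<in>{..<n}. (2 * \<gamma> + (if a \<in> ?A then real (m - 1) * \<gamma> else 0)) * pmf ?p a)"
  proof (rule sum_mono)
    fix a assume "a \<in> {..<n}"
    then have an: "a < n" by simp
    have "F a \<le> 2 * \<gamma> + (if a \<in> ?A then real (m - 1) * \<gamma> else 0)"
      unfolding F_def by (rule top_F[OF M1 lom g0 g1 so pol nM an])
    then show "F a * pmf ?p a \<le> (2 * \<gamma> + (if a \<in> ?A then real (m - 1) * \<gamma> else 0)) * pmf ?p a"
      by (rule mult_right_mono) simp
  qed
  also have "\<dots> = 2 * \<gamma> * (\<Sum>a\<in>{..<n}. pmf ?p a) + \<gamma> * (real (m - 1) * (\<Sum>a\<in>{..<n}. (if a \<in> ?A then pmf ?p a else 0)))"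
  proof -
    have "(\<Sum>a\<in>{..<n}. (2 * \<gamma> + (if a \<in> ?A then real (m - 1) * \<gamma> else 0)) * pmf ?p a)
       = (\<Sum>a\<in>{..<n}. 2 * \<gamma> * pmf ?p a + (\<gamma> * real (m - 1)) * (if a \<in> ?A then pmf ?p a else 0))"
      by (rule sum.cong) (auto simp: algebra_simps)
    also have "\<dots> = 2 * \<gamma> * (\<Sum>a\<in>{..<n}. pmf ?p a) + (\<gamma> * real (m - 1)) * (\<Sum>a\<in>{..<n}. (if a \<in> ?A then pmf ?p a else 0))"
      by (simp only: sum.distrib sum_distrib_left)
    finally show ?thesis by (simp only: mult.assoc)
  qed
  also have "(\<Sum>a\<in>{..<n}. pmf ?p a) = 1" by (rule sum_pmf_eq_1) (use pol in auto)
  also have "(\<Sum>a\<in>{..<n}. (if a \<in> ?A then pmf ?p a else 0)) = (\<Sum>a\<in>{..<n} \<inter> ?A. pmf ?p a)"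
    by (rule sum.inter_restrict[symmetric]) simp
  also have "{..<n} \<inter> ?A = ?A" using lom by auto
  also have "2 * \<gamma> * 1 + \<gamma> * (real (m - 1) * (\<Sum>a\<in>?A. pmf ?p a)) \<le> 2 * \<gamma> + \<gamma> * 2"
    using mult_left_mono[OF blk g0] by simp
  finally show ?thesis by simp
qed

lemma opt_bound:
  fixes \<gamma> :: real
  assumes lom: "lo + m \<le> n" and g0: "0 \<le> \<gamma>" and g1: "\<gamma> \<le> 1"
  shows "(\<Sum>j<m. \<gamma> ^ Suc j) \<le> opt_value n \<gamma> (gE n M lo m) 0 Suc"
proof -
  let ?E = "gE n M lo m"
  let ?A = "{lo..<lo+m}"
  define xs where "xs = [lo..<lo+m] @ filter (\<lambda>i. i \<notin> ?A) [0..<n]"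
  let ?ts = "tour_state 0 Suc xs"
  let ?val = "\<lambda>xs. \<Sum>j<n. \<gamma> ^ (\<Sum>t\<le>j. sdist ?E (tour_state 0 Suc xs t) (tour_state 0 Suc xs (Suc t)))"
  have xsd: "distinct xs" unfolding xs_def by auto
  have xss: "set xs = {..<n}" unfolding xs_def using lom by auto
  have fin: "finite {xs. distinct xs \<and> set xs = {..<n}}"
    by (rule finite_subset[OF _ finite_subset_distinct[of "{..<n}"]]) auto
  have step: "sdist ?E (?ts t) (?ts (Suc t)) \<le> 1" if t: "t < m" for t
  proof -
    have "?ts (Suc t) = Suc (lo + t)" unfolding tour_state_def xs_def using t by (simp add: nth_append)
    moreover have "(?ts t, Suc (lo + t)) \<in> ?E"
    proof (cases t)
      case 0
      then show ?thesis unfolding tour_state_def gE_def using t lom by auto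
    next
      case (Suc t')
      then have "?ts t = Suc (lo + t')" unfolding tour_state_def xs_def using t by (simp add: nth_append)
      then show ?thesis unfolding gE_def using t Suc by auto
    qed
    ultimately show ?thesis by (intro sdist_le) auto
  qed
  have "(\<Sum>j<m. \<gamma> ^ Suc j) \<le> (\<Sum>j<m. \<gamma> ^ (\<Sum>t\<le>j. sdist ?E (?ts t) (?ts (Suc t))))"
  proof (rule sum_mono)
    fix j assume "j \<in> {..<m}"
    then have "(\<Sum>t\<le>j. sdist ?E (?ts t) (?ts (Suc t))) \<le> (\<Sum>t\<le>j. 1)"
      by (intro sum_mono step) auto
    then have "(\<Sum>t\<le>j. sdist ?E (?ts t) (?ts (Suc t))) \<le> Suc j" by simp
    then show "\<gamma> ^ Suc j \<le> \<gamma> ^ (\<Sum>t\<le>j. sdist ?E (?ts t) (?ts (Suc t)))"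
      using g0 g1 by (intro power_decreasing) auto
  qed
  also have "\<dots> \<le> ?val xs"
    by (rule sum_mono2) (use lom g0 in auto)
  also have "\<dots> \<le> opt_value n \<gamma> ?E 0 Suc"
    unfolding opt_value_def by (rule Max_ge) (use fin xsd xss in auto)
  finally show ?thesis .
qed

lemma block_exists:
  fixes p :: "nat pmf"
  assumes k: "1 \<le> k" and km: "k * m \<le> n" and sp: "set_pmf p \<subseteq> {..<n}"
  shows "\<exists>b<k. (\<Sum>a\<in>{b*m..<b*m+m}. pmf p a) \<le> 1 / real k"
proof (rule ccontr)
  assume "\<not> ?thesis"
  then have gt: "\<And>b. b < k \<Longrightarrow> 1 / real k < (\<Sum>a\<in>{b*m..<b*m+m}. pmf p a)" by force
  have "(\<Sum>b<k. 1 / real k) < (\<Sum>b<k. (\<Sum>a\<in>{b*m..<b*m+m}. pmf p a))"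
  proof (rule sum_strict_mono)
    show "{..<k} \<noteq> {}" using k by (metis lessThan_iff less_le_trans less_one emptyE)
  qed (use gt in auto)
  also have "\<dots> = (\<Sum>a<k*m. pmf p a)" by (rule sum.nat_group)
  also have "\<dots> \<le> (\<Sum>a<n. pmf p a)" by (rule sum_mono2) (use km in auto)
  also have "\<dots> = 1" by (rule sum_pmf_eq_1) (use sp in auto)
  finally show False using k by simp
qed

lemma m_arith:
  fixes n m k :: nat
  assumes "n \<le> m * m" "(m - 1) * (m - 1) < n" "k = n div m" "1 \<le> k" "0 < m"
  shows "m - 1 \<le> 2 * k"
proof (rule ccontr)
  assume "\<not> ?thesis"
  then have a: "2 * k + 2 \<le> m" by simp
  have "n < (k + 1) * m" using assms(3,5)
    by (metis add.commute div_mult_mod_eq mod_less_divisor mult_Suc nat_add_left_cancel_less plus_1_eq_Suc)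
  then have "2 * n < (2 * k + 2) * m" by simp
  also have "\<dots> \<le> m * m" using mult_right_mono[OF a, of m] by simp
  finally have "2 * ((m - 1) * (m - 1)) < m * m" using assms(2) by simp
  moreover have "m \<ge> 4" using a assms(4) by simp
  ultimately show False
  proof -
    obtain q where q: "m = q + 4" using \<open>m \<ge> 4\<close> by (metis add.commute le_Suc_ex)
    show False using \<open>2 * ((m - 1) * (m - 1)) < m * m\<close> unfolding q by (simp add: algebra_simps)
  qed
qed

lemma gamma_pow:
  fixes n m :: nat
  assumes n1: "1 \<le> n" and nm: "n \<le> m * m"
  shows "(1 - 1 / sqrt n) ^ m \<le> 1 / 2"
proof -
  let ?g = "1 - 1 / sqrt n"
  have s1: "1 \<le> sqrt n" using n1 by simp
  have g0: "0 \<le> ?g" using s1 by (simp add: field_simps)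
  have "?g \<le> exp (- (1 / sqrt n))" using exp_ge_add_one_self[of "- (1 / sqrt n)"] by simp
  then have "?g ^ m \<le> exp (- (1 / sqrt n)) ^ m" using g0 by (intro power_mono) auto
  also have "\<dots> = exp (real m * (- (1 / sqrt n)))" by (rule exp_of_nat_mult[symmetric])
  also have "\<dots> \<le> exp (-1)"
  proof -
    have "real n \<le> real m * real m" using nm by (metis of_nat_le_iff of_nat_mult)
    then have "sqrt n \<le> sqrt (real m * real m)" by (rule real_sqrt_le_mono)
    then have "sqrt n \<le> real m" by simp
    then have "1 \<le> real m / sqrt n" using s1 by (simp add: field_simps)
    then show ?thesis by simp
  qed
  also have "\<dots> \<le> 1 / 2"
  proof -
    have "2 \<le> exp (1::real)" using exp_ge_add_one_self[of 1] by simp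
    then show ?thesis by (simp add: exp_minus field_simps)
  qed
  finally show ?thesis .
qed

theorem theorem4:
  fixes n :: nat and \<pi> :: policy
  assumes "1 \<le> n"
    and "\<forall>x h v. set_pmf (\<pi> x h v) \<subseteq> {..<n}"
  shows "\<exists>E s0 rs. crd_mdp n E s0 rs \<and>
           (\<forall>nx. shortest_opts n E rs nx \<longrightarrow>
              policy_value n (1 - 1 / sqrt n) E s0 rs nx \<pi> / opt_value n (1 - 1 / sqrt n) E s0 rs
                \<le> 8 / sqrt n)"
proof -
  note n1 = assms(1) and pol = assms(2)
  define \<gamma> where "\<gamma> = 1 - 1 / sqrt n"
  have s1: "1 \<le> sqrt n" using n1 by simp
  have g0: "0 \<le> \<gamma>" unfolding \<gamma>_def using s1 by (simp add: field_simps)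
  have g1: "\<gamma> < 1" unfolding \<gamma>_def using s1 by simp
  define m where "m = (LEAST m. n \<le> m * m)"
  have nm: "n \<le> m * m" unfolding m_def by (rule LeastI[of _ n]) (use n1 in simp)
  have m0: "0 < m" using nm n1 by (cases m) auto
  have mn: "m \<le> n" unfolding m_def by (rule Least_le) (use n1 in simp)
  have mm: "(m - 1) * (m - 1) < n"
  proof -
    have "\<not> n \<le> (m - 1) * (m - 1)" unfolding m_def by (rule not_less_Least) (use m0 in \<open>simp add: m_def\<close>)
    then show ?thesis by simp
  qed
  define k where "k = n div m"
  have k1: "1 \<le> k" unfolding k_def using mn m0 by (metis One_nat_def Suc_leI div_greater_zero_iff)
  have km: "k * m \<le> n" unfolding k_def by simp
  have mk: "m - 1 \<le> 2 * k" by (rule m_arith[OF nm mm k_def k1 m0])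
  obtain M0 where M0: "\<gamma> ^ M0 < 1 / real n" using real_arch_pow_inv[OF _ g1, of "1 / real n"] n1 by auto
  define M where "M = Suc M0"
  have M1: "1 \<le> M" unfolding M_def by simp
  have nM: "real n * \<gamma> ^ M \<le> 1"
  proof -
    have "\<gamma> ^ M \<le> \<gamma> ^ M0" unfolding M_def using g0 g1 by (intro power_decreasing) auto
    then have "\<gamma> ^ M \<le> 1 / real n" using M0 by simp
    then show ?thesis using n1 by (simp add: field_simps)
  qed
  define p0 where "p0 = \<pi> 0 [] (map (\<lambda>i. \<gamma>) [0..<n])"
  obtain b where b: "b < k" "(\<Sum>a\<in>{b*m..<b*m+m}. pmf p0 a) \<le> 1 / real k"
    using block_exists[OF k1 km, of p0] pol unfolding p0_def by auto
  define lo where "lo = b * m"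
  have lom: "lo + m \<le> n"
  proof -
    have "lo + m = Suc b * m" unfolding lo_def by simp
    also have "\<dots> \<le> k * m" using b(1) by (intro mult_right_mono) auto
    finally show ?thesis using km by simp
  qed
  define E where "E = gE n M lo m"
  have ov: "optvals n \<gamma> E Suc 0 = map (\<lambda>i. \<gamma>) [0..<n]"
    unfolding optvals_def E_def using gE_d0 by (intro map_cong) auto
  have blk: "real (m - 1) * (\<Sum>a\<in>{lo..<lo+m}. pmf (\<pi> 0 [] (optvals n \<gamma> (gE n M lo m) Suc 0)) a) \<le> 2"
  proof -
    have "(\<Sum>a\<in>{lo..<lo+m}. pmf (\<pi> 0 [] (optvals n \<gamma> (gE n M lo m) Suc 0)) a) \<le> 1 / real k"
      using b(2) ov unfolding p0_def lo_def E_def by simp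
    then have "real (m - 1) * (\<Sum>a\<in>{lo..<lo+m}. pmf (\<pi> 0 [] (optvals n \<gamma> (gE n M lo m) Suc 0)) a)
        \<le> real (m - 1) * (1 / real k)" by (rule mult_left_mono) simp
    also have "\<dots> \<le> 2" using mk k1 by (simp add: field_simps)
    finally show ?thesis .
  qed
  have O: "\<gamma> * sqrt n / 2 \<le> opt_value n \<gamma> E 0 Suc"
  proof -
    have gm: "\<gamma> ^ m \<le> 1 / 2" unfolding \<gamma>_def by (rule gamma_pow[OF n1 nm])
    have "(\<Sum>j<m. \<gamma> ^ Suc j) = \<gamma> * (\<Sum>j<m. \<gamma> ^ j)" by (simp add: sum_distrib_left)
    also have "(\<Sum>j<m. \<gamma> ^ j) = (1 - \<gamma> ^ m) / (1 - \<gamma>)" using sum_gp_strict[of \<gamma> m] g1 by simp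
    also have "1 - \<gamma> = 1 / sqrt n" unfolding \<gamma>_def by simp
    finally have "(\<Sum>j<m. \<gamma> ^ Suc j) = \<gamma> * ((1 - \<gamma> ^ m) * sqrt n)" by simp
    moreover have "\<gamma> * sqrt n / 2 \<le> \<gamma> * ((1 - \<gamma> ^ m) * sqrt n)"
    proof -
      have "sqrt n / 2 \<le> (1 - \<gamma> ^ m) * sqrt n" using gm s1 by (simp add: field_simps)
      then show ?thesis using mult_left_mono[OF _ g0] by (simp add: mult.assoc)
    qed
    ultimately show ?thesis using opt_bound[OF lom g0 less_imp_le[OF g1], of M] unfolding E_def by simp
  qed
  show ?thesis
  proof (intro exI conjI allI impI)
    show "crd_mdp n E 0 Suc" unfolding E_def by (rule gE_crd[OF M1])
    fix nx assume so: "shortest_opts n E Suc nx"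
    have P: "policy_value n \<gamma> E 0 Suc nx \<pi> \<le> 4 * \<gamma>"
      unfolding policy_value_def
      by (rule cSUP_least) (use top_bound[OF M1 lom g0 less_imp_le[OF g1] so[unfolded E_def] pol nM blk] in \<open>auto simp: E_def\<close>)
    have "policy_value n \<gamma> E 0 Suc nx \<pi> / opt_value n \<gamma> E 0 Suc \<le> 8 / sqrt n"
    proof (cases "\<gamma> = 0")
      case True
      then have "policy_value n \<gamma> E 0 Suc nx \<pi> \<le> 0" using P by simp
      moreover have "0 \<le> opt_value n \<gamma> E 0 Suc" using O True by simp
      ultimately have "policy_value n \<gamma> E 0 Suc nx \<pi> / opt_value n \<gamma> E 0 Suc \<le> 0"
        by (simp add: divide_nonpos_nonneg)
      then show ?thesis using s1 by (smt (verit) divide_nonneg_pos)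
    next
      case False
      then have gp: "0 < \<gamma>" using g0 by simp
      have Op: "0 < \<gamma> * sqrt n / 2" using gp s1 by simp
      have "policy_value n \<gamma> E 0 Suc nx \<pi> / opt_value n \<gamma> E 0 Suc \<le> 4 * \<gamma> / opt_value n \<gamma> E 0 Suc"
        using P O Op by (intro divide_right_mono) auto
      also have "\<dots> \<le> 4 * \<gamma> / (\<gamma> * sqrt n / 2)"
        using O Op gp by (intro divide_left_mono) auto
      also have "\<dots> = 8 / sqrt n" using gp by (simp add: field_simps)
      finally show ?thesis .
    qed
    then show "policy_value n (1 - 1 / sqrt n) E 0 Suc nx \<pi> / opt_value n (1 - 1 / sqrt n) E 0 Suc \<le> 8 / sqrt n"
      unfolding \<gamma>_def .
  qed
qed

end
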